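(* Let $X$ be a real Hilbert space, let $\rho>-1$ and let $A\colon X\rightrightarrows X$ be $\rho$-comonotone with $\operatorname{ran}(\mathrm{Id}+A)=X$. Then $A$ is maximally $\rho$-comonotone.
   Context: For $\rho\in\mathbb R$, $A\colon X\rightrightarrows X$ is $\rho$-comonotone if $\langle x-y,u-v\rangle\ge\rho\|u-v\|^2$ for all $(x,u),(y,v)\in\operatorname{gra}A$; maximally $\rho$-comonotone if moreover no $\rho$-comonotone operator has a graph properly containing $\operatorname{gra}A$. *)

theory Defs
  imports "HOL-Analysis.Analysis"
begin

text \<open>A set-valued operator A : X \<rightrightarrows> X is represented by its graph, a relation on X.
  (x,u) \<in> A means u \<in> A x.\<close>

definition comonotone :: "real \<Rightarrow> ('a::real_inner \<times> 'a) set \<Rightarrow> bool" where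
  "comonotone \<rho> A \<longleftrightarrow>
     (\<forall>x u y v. (x, u) \<in> A \<longrightarrow> (y, v) \<in> A \<longrightarrow> inner (x - y) (u - v) \<ge> \<rho> * (norm (u - v))\<^sup>2)"

definition max_comonotone :: "real \<Rightarrow> ('a::real_inner \<times> 'a) set \<Rightarrow> bool" where
  "max_comonotone \<rho> A \<longleftrightarrow>
     comonotone \<rho> A \<and> (\<forall>B. comonotone \<rho> B \<longrightarrow> A \<subseteq> B \<longrightarrow> B = A)"

definition ran_Id_plus :: "('a::real_vector \<times> 'a) set \<Rightarrow> 'a set" where
  "ran_Id_plus A = {x + u | x u. (x, u) \<in> A}"

end

theory Submission
  imports Defs
begin

theorem proposition2p15:
  fixes A :: "('a::{real_inner, complete_space} \<times> 'a) set" and \<rho> :: real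
  assumes "\<rho> > -1"
    and "comonotone \<rho> A"
    and "ran_Id_plus A = UNIV"
  shows "max_comonotone \<rho> A"
  unfolding max_comonotone_def
proof (intro conjI allI impI)
  show "comonotone \<rho> A" by fact
  fix B :: "('a \<times> 'a) set"
  assume cB: "comonotone \<rho> B" and sub: "A \<subseteq> B"
  show "B = A"
  proof
    show "A \<subseteq> B" by fact
    show "B \<subseteq> A"
    proof
      fix p assume pB: "p \<in> B"
      obtain y v where p: "p = (y, v)" by (cases p)
      have "y + v \<in> ran_Id_plus A" using assms(3) by simp
      then obtain x u where xu: "(x, u) \<in> A" and e: "y + v = x + u"
        unfolding ran_Id_plus_def by blast
      have "(x, u) \<in> B" using xu sub by blast
      hence ineq: "inner (x - y) (u - v) \<ge> \<rho> * (norm (u - v))\<^sup>2"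
        using cB pB p unfolding comonotone_def by blast
      have "x - y = -(u - v)" using e by (simp add: algebra_simps)
      hence "inner (x - y) (u - v) = - (norm (u - v))\<^sup>2"
        by (simp add: power2_norm_eq_inner inner_minus_left del: minus_diff_eq)
      with ineq have "(1 + \<rho>) * (norm (u - v))\<^sup>2 \<le> 0" by (simp add: algebra_simps)
      moreover have "(norm (u - v))\<^sup>2 \<ge> 0" by simp
      ultimately have "(norm (u - v))\<^sup>2 = 0" using assms(1)
        by (smt (verit) mult_pos_pos)
      hence "u = v" by simp
      hence "x = y" using e by simp
      thus "p \<in> A" using xu p \<open>u = v\<close> by simp
    qed
  qed
qed

end
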